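(* Let $\Gamma$ be the graph with exactly two vertices $s$ and $t$, which are not adjacent, and let $G=G(C_\Gamma)$. If $a\in A_5(s)$ is an involution, then its centralizer $Z_G(a)$ is contained in $S_5(s)$.
   Context: For a graph $\Gamma$ with vertex set $S$, $G(C_\Gamma)$ is the group with generators $s_1,s_2,s_3,s_4$ for each $s\in S$ and exactly the following relations: every generator is an involution; for each $s\in S$, $(s_is_{i+1})^3=e$ for $i=1,2,3$ and $(s_is_j)^2=e$ for $|i-j|\ge2$; for all distinct $s,t\in S$, $(s_4t_4)^2=e$; for all distinct adjacent $s,t\in S$, $(s_1t_1)^2=(s_1t_3)^2=(s_3t_1)^2=(s_3t_3)^2=e$. Thus here $G$ is generated by $s_1,\dots,s_4,t_1,\dots,t_4$ with the relations among the $s_i$, among the $t_i$, and $(s_4t_4)^2=e$ only. $S_5(s)=\langle s_1,s_2,s_3,s_4\rangle\cong S_5$ and $A_5(s)$ is its index-$2$ subgroup ($\cong A_5$). $Z_G(a)=\{g\in G: ga=ag\}$. *)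

theory Defs
  imports "HOL-Algebra.Generated_Groups"
begin

text \<open>Since every generator is an involution, elements of G are represented by
  words (lists) of generators; the group is the free monoid on the generators
  modulo the congruence generated by the relators (r = empty word).\<close>

datatype vtx = Vs | Vt

definition Gens :: "(vtx \<times> nat) set" where
  "Gens = {(v, i). i \<in> {1..4}}"

definition Rels :: "(vtx \<times> nat) list set" where
  "Rels =
     {[(v, i), (v, i)] | v i. i \<in> {1..4}}
   \<union> {concat (replicate 3 [(v, i), (v, Suc i)]) | v i. i \<in> {1..3}}
   \<union> {concat (replicate 2 [(v, i), (v, j)]) | v i j. i \<in> {1..4} \<and> j \<in> {1..4} \<and> (i + 2 \<le> j \<or> j + 2 \<le> i)}
   \<union> {concat (replicate 2 [(v, 4), (w, 4)]) | v w. v \<noteq> w}"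

text \<open>No relations between s_1,s_3 and t_1,t_3 since s and t are not adjacent.\<close>

definition rstep :: "((vtx \<times> nat) list \<times> (vtx \<times> nat) list) set" where
  "rstep = {(u @ r @ v, u @ v) | u r v. u \<in> lists Gens \<and> v \<in> lists Gens \<and> r \<in> Rels}"

definition weq :: "((vtx \<times> nat) list \<times> (vtx \<times> nat) list) set" where
  "weq = (rstep \<union> rstep\<inverse>)\<^sup>*"

definition cls :: "(vtx \<times> nat) list \<Rightarrow> (vtx \<times> nat) list set" where
  "cls w = weq `` {w}"

definition GC :: "(vtx \<times> nat) list set monoid" where
  "GC = \<lparr> carrier = cls ` lists Gens,
          mult = (\<lambda>A B. weq `` {u @ v | u v. u \<in> A \<and> v \<in> B}),
          one = cls [] \<rparr>"

definition S5s :: "(vtx \<times> nat) list set set" where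
  "S5s = generate GC {cls [(Vs, i)] | i. i \<in> {1..4}}"

text \<open>A_5(s): the index-2 subgroup of S_5(s), i.e. elements represented by
  words of even length in s_1..s_4 (the even permutations).\<close>
definition A5s :: "(vtx \<times> nat) list set set" where
  "A5s = {cls w | w. w \<in> lists {(Vs, i) | i. i \<in> {1..4}} \<and> even (length w)}"

end

theory Submission
  imports Defs
begin

lemma Rels_Gens: "r \<in> Rels \<Longrightarrow> r \<in> lists Gens"
  unfolding Rels_def Gens_def by (auto simp: numeral_eq_Suc)

lemma rstep_Gens: "(x,y) \<in> rstep \<Longrightarrow> x \<in> lists Gens \<and> y \<in> lists Gens"
proof -
  assume "(x,y) \<in> rstep"
  then obtain u r v where "x = u@r@v" "y = u@v" "u \<in> lists Gens" "v \<in> lists Gens" "r \<in> Rels"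
    unfolding rstep_def by blast
  thus ?thesis using Rels_Gens[of r] by simp
qed

lemma weq_Gens: "(x,y) \<in> weq \<Longrightarrow> x \<in> lists Gens \<Longrightarrow> y \<in> lists Gens"
  unfolding weq_def
  by (induction rule: rtrancl_induct) (auto dest: rstep_Gens)

lemma weq_refl[simp]: "(x,x) \<in> weq" unfolding weq_def by simp

lemma weq_sym: "(x,y) \<in> weq \<Longrightarrow> (y,x) \<in> weq"
proof -
  assume "(x,y) \<in> weq"
  hence "(y,x) \<in> ((rstep \<union> rstep\<inverse>)\<^sup>*)\<inverse>" unfolding weq_def by simp
  hence "(y,x) \<in> ((rstep \<union> rstep\<inverse>)\<inverse>)\<^sup>*" by (simp add: rtrancl_converse)
  moreover have "(rstep \<union> rstep\<inverse>)\<inverse> = rstep \<union> rstep\<inverse>" by auto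
  ultimately show ?thesis unfolding weq_def by simp
qed

lemma weq_trans: "(x,y) \<in> weq \<Longrightarrow> (y,z) \<in> weq \<Longrightarrow> (x,z) \<in> weq"
  unfolding weq_def by (rule rtrancl_trans)

lemma rstep_weq: "(x,y) \<in> rstep \<Longrightarrow> (x,y) \<in> weq"
  unfolding weq_def by auto

lemma rstep_cong: "(x,y) \<in> rstep \<Longrightarrow> p \<in> lists Gens \<Longrightarrow> q \<in> lists Gens
   \<Longrightarrow> (p@x@q, p@y@q) \<in> rstep"
proof -
  assume "(x,y) \<in> rstep" and pq: "p \<in> lists Gens" "q \<in> lists Gens"
  then obtain u r v where "x = u@r@v" "y = u@v" "u \<in> lists Gens" "v \<in> lists Gens" "r \<in> Rels"
    unfolding rstep_def by blast
  thus ?thesis unfolding rstep_def mem_Collect_eq using pq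
    apply -
    apply (rule exI[of _ "p@u"], rule exI[of _ r], rule exI[of _ "v@q"])
    by auto
qed

lemma weq_cong: "(x,y) \<in> weq \<Longrightarrow> p \<in> lists Gens \<Longrightarrow> q \<in> lists Gens
   \<Longrightarrow> (p@x@q, p@y@q) \<in> weq"
  unfolding weq_def
proof (induction rule: rtrancl_induct)
  case base thus ?case by simp
next
  case (step y z)
  from step.hyps(2) have "(p@y@q, p@z@q) \<in> rstep \<union> rstep\<inverse>"
    using rstep_cong[OF _ step.prems] by auto
  with step.IH step.prems show ?case by (meson rtrancl.rtrancl_into_rtrancl)
qed

lemma in_cls: "y \<in> cls x \<longleftrightarrow> (x,y) \<in> weq"
  unfolding cls_def by simp

lemma cls_eq: "cls x = cls y \<longleftrightarrow> (x,y) \<in> weq"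
proof
  assume "cls x = cls y"
  hence "y \<in> cls x" using in_cls by auto
  thus "(x,y) \<in> weq" using in_cls by auto
next
  assume "(x,y) \<in> weq"
  thus "cls x = cls y" unfolding cls_def using weq_sym weq_trans by blast
qed

lemma mult_cls: "x \<in> lists Gens \<Longrightarrow> y \<in> lists Gens \<Longrightarrow> cls x \<otimes>\<^bsub>GC\<^esub> cls y = cls (x@y)"
proof -
  assume x: "x \<in> lists Gens" and y: "y \<in> lists Gens"
  have "weq `` {u @ v |u v. u \<in> cls x \<and> v \<in> cls y} = cls (x@y)"
  proof
    show "weq `` {u @ v |u v. u \<in> cls x \<and> v \<in> cls y} \<subseteq> cls (x@y)"
    proof
      fix z assume "z \<in> weq `` {u @ v |u v. u \<in> cls x \<and> v \<in> cls y}"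
      then obtain u v where uv: "(x,u) \<in> weq" "(y,v) \<in> weq" "(u@v, z) \<in> weq"
        unfolding cls_def by auto
      have u: "u \<in> lists Gens" using weq_Gens uv x by blast
      have "([]@x@y, []@u@y) \<in> weq" by (rule weq_cong) (use uv y in auto)
      moreover have "(u@y@[], u@v@[]) \<in> weq" by (rule weq_cong) (use uv u in auto)
      ultimately have "(x@y, u@v) \<in> weq" using weq_trans by simp
      thus "z \<in> cls (x@y)" using uv weq_trans in_cls by blast
    qed
  next
    show "cls (x@y) \<subseteq> weq `` {u @ v |u v. u \<in> cls x \<and> v \<in> cls y}"
    proof
      fix z assume "z \<in> cls (x@y)"
      hence "(x@y, z) \<in> weq" by (simp add: in_cls)
      moreover have "x@y \<in> {u @ v |u v. u \<in> cls x \<and> v \<in> cls y}" unfolding mem_Collect_eq by (rule exI[of _ x], rule exI[of _ y]) (simp add: in_cls)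
      ultimately show "z \<in> weq `` {u @ v |u v. u \<in> cls x \<and> v \<in> cls y}" by blast
    qed
  qed
  thus ?thesis unfolding GC_def by (simp add: cls_def)
qed

lemma carrier_GC: "carrier GC = cls ` lists Gens" unfolding GC_def by simp
lemma one_GC: "\<one>\<^bsub>GC\<^esub> = cls []" unfolding GC_def by simp

lemma Gens_rel2: "a \<in> Gens \<Longrightarrow> [a,a] \<in> Rels"
  unfolding Gens_def Rels_def by auto

lemma rev_cancel: "x \<in> lists Gens \<Longrightarrow> (rev x @ x, []) \<in> weq"
proof (induction x)
  case Nil thus ?case by simp
next
  case (Cons a x)
  have "(rev x @ [a,a] @ x, rev x @ x) \<in> rstep"
    unfolding rstep_def mem_Collect_eq using Cons.prems Gens_rel2[of a]
    apply -
    apply (rule exI[of _ "rev x"], rule exI[of _ "[a,a]"], rule exI[of _ x])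
    by auto
  hence "(rev (a#x) @ (a#x), rev x @ x) \<in> weq" using rstep_weq by simp
  with Cons show ?case using weq_trans by auto
qed

lemma grpGC: "group GC"
proof (rule groupI)
  fix x y assume "x \<in> carrier GC" "y \<in> carrier GC"
  then obtain u v where "u \<in> lists Gens" "v \<in> lists Gens" "x = cls u" "y = cls v"
    unfolding carrier_GC by blast
  thus "x \<otimes>\<^bsub>GC\<^esub> y \<in> carrier GC" unfolding carrier_GC by (simp add: mult_cls)
next
  show "\<one>\<^bsub>GC\<^esub> \<in> carrier GC" unfolding carrier_GC one_GC by auto
next
  fix x y z assume "x \<in> carrier GC" "y \<in> carrier GC" "z \<in> carrier GC"
  then obtain u v w where "u \<in> lists Gens" "v \<in> lists Gens" "w \<in> lists Gens"
     "x = cls u" "y = cls v" "z = cls w"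
    unfolding carrier_GC by blast
  thus "x \<otimes>\<^bsub>GC\<^esub> y \<otimes>\<^bsub>GC\<^esub> z = x \<otimes>\<^bsub>GC\<^esub> (y \<otimes>\<^bsub>GC\<^esub> z)"
    by (simp add: mult_cls)
next
  fix x assume "x \<in> carrier GC"
  then obtain u where "u \<in> lists Gens" "x = cls u" unfolding carrier_GC by blast
  thus "\<one>\<^bsub>GC\<^esub> \<otimes>\<^bsub>GC\<^esub> x = x" unfolding one_GC
    using mult_cls[of "[]" u] by simp
next
  fix x assume "x \<in> carrier GC"
  then obtain w where w: "w \<in> lists Gens" "x = cls w" unfolding carrier_GC by auto
  have "rev w \<in> lists Gens" using w by auto
  hence "cls (rev w) \<otimes>\<^bsub>GC\<^esub> x = \<one>\<^bsub>GC\<^esub>"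
    using w rev_cancel[of w] by (simp add: mult_cls one_GC cls_eq)
  moreover have "cls (rev w) \<in> carrier GC" using w unfolding carrier_GC by auto
  ultimately show "\<exists>y\<in>carrier GC. y \<otimes>\<^bsub>GC\<^esub> x = \<one>\<^bsub>GC\<^esub>" by blast
qed

interpretation G: group GC by (rule grpGC)

lemma inv_cls: "w \<in> lists Gens \<Longrightarrow> inv\<^bsub>GC\<^esub> (cls w) = cls (rev w)"
proof -
  assume w: "w \<in> lists Gens"
  have "rev w \<in> lists Gens" using w by auto
  hence "cls (rev w) \<otimes>\<^bsub>GC\<^esub> cls w = \<one>\<^bsub>GC\<^esub>"
    using w rev_cancel[of w] by (simp add: mult_cls one_GC cls_eq)
  moreover have "cls (rev w) \<in> carrier GC" "cls w \<in> carrier GC" using w unfolding carrier_GC by auto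
  ultimately show ?thesis using G.inv_equality by blast
qed

lemma weq_parity: "(x,y) \<in> weq \<Longrightarrow> even (length x) = even (length y)"
proof -
  have R: "r \<in> Rels \<Longrightarrow> even (length r)" for r
    unfolding Rels_def by (auto simp: numeral_eq_Suc) presburger+
  have S: "(x,y) \<in> rstep \<Longrightarrow> even (length x) = even (length y)" for x y
    unfolding rstep_def using R by auto
  assume "(x,y) \<in> weq"
  thus ?thesis unfolding weq_def
    by (induction rule: rtrancl_induct) (auto dest: S)
qed


abbreviation gm (infixl "\<cdot>" 70) where "x \<cdot> y \<equiv> x \<otimes>\<^bsub>GC\<^esub> y"
abbreviation gone where "gone \<equiv> \<one>\<^bsub>GC\<^esub>"
abbreviation gi where "gi x \<equiv> inv\<^bsub>GC\<^esub> x"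

definition s4 :: "(vtx \<times> nat) list set" where "s4 = cls [(Vs,4)]"
definition Cg where "Cg = {gone, s4}"

lemma Gens_s4: "(Vs,4) \<in> Gens" unfolding Gens_def by auto

lemma s4_car[simp]: "s4 \<in> carrier GC"
  unfolding s4_def carrier_GC using Gens_s4 by auto

lemma s4s4: "s4 \<cdot> s4 = gone"
proof -
  have "([]@[(Vs,4),(Vs,4)]@[], []@[]) \<in> rstep"
    unfolding rstep_def mem_Collect_eq using Gens_rel2[OF Gens_s4]
    by (rule_tac x="[]" in exI, rule_tac x="[(Vs,4),(Vs,4)]" in exI, rule_tac x="[]" in exI) auto
  thus ?thesis unfolding s4_def one_GC using Gens_s4
    by (simp add: mult_cls cls_eq rstep_weq)
qed

lemma inv_s4: "gi s4 = s4"
  by (rule G.inv_equality[OF s4s4 s4_car s4_car])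

lemma s4s4z: "z \<in> carrier GC \<Longrightarrow> s4 \<cdot> (s4 \<cdot> z) = z"
proof -
  assume z: "z \<in> carrier GC"
  have "s4 \<cdot> (s4 \<cdot> z) = (s4 \<cdot> s4) \<cdot> z" using z by (simp add: G.m_assoc)
  thus ?thesis using z s4s4 by simp
qed

lemma Cg_car: "Cg \<subseteq> carrier GC" unfolding Cg_def by auto

lemma s4_mulC: "z \<in> carrier GC \<Longrightarrow> (s4 \<cdot> z \<in> Cg) = (z \<in> Cg)"
proof
  assume z: "z \<in> carrier GC" and "s4 \<cdot> z \<in> Cg"
  hence "s4 \<cdot> z = gone \<or> s4 \<cdot> z = s4" unfolding Cg_def by blast
  hence "s4 \<cdot> (s4 \<cdot> z) = s4 \<cdot> gone \<or> s4 \<cdot> (s4 \<cdot> z) = s4 \<cdot> s4" by metis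
  hence "s4 \<cdot> (s4 \<cdot> z) = s4 \<or> s4 \<cdot> (s4 \<cdot> z) = gone" by (simp only: s4s4 G.r_one s4_car)
  hence "z = s4 \<or> z = gone" by (simp only: s4s4z[OF z])
  thus "z \<in> Cg" unfolding Cg_def by blast
next
  assume "z \<in> carrier GC" "z \<in> Cg"
  hence "z = gone \<or> z = s4" unfolding Cg_def by blast
  thus "s4 \<cdot> z \<in> Cg" unfolding Cg_def using s4s4 G.r_one[OF s4_car] by blast
qed

lemma Cg_mult: "c \<in> Cg \<Longrightarrow> d \<in> Cg \<Longrightarrow> c \<cdot> d \<in> Cg"
  unfolding Cg_def using s4s4 G.r_one[OF s4_car] G.l_one[OF s4_car] G.l_one[OF G.one_closed] by blast

lemma Cg_inv: "c \<in> Cg \<Longrightarrow> gi c \<in> Cg"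
  unfolding Cg_def using inv_s4 G.inv_one by blast

definition orb where "orb z = {z, s4 \<cdot> z}"
definition rt where "rt z = (if z \<in> Cg then gone else (SOME t. t \<in> orb z))"
definition cp where "cp z = z \<cdot> gi (rt z)"

lemma rt_C: "z \<in> Cg \<Longrightarrow> rt z = gone" unfolding rt_def by simp

lemma rt_nC: "z \<notin> Cg \<Longrightarrow> rt z \<in> orb z"
  unfolding rt_def by (simp, rule someI[of _ z], simp add: orb_def)

lemma orb_s4: "z \<in> carrier GC \<Longrightarrow> orb (s4 \<cdot> z) = orb z"
  unfolding orb_def using s4s4z by auto

lemma rt_s4: "z \<in> carrier GC \<Longrightarrow> rt (s4 \<cdot> z) = rt z"
  unfolding rt_def using s4_mulC orb_s4 by simp

lemma rt_mulC: "c \<in> Cg \<Longrightarrow> z \<in> carrier GC \<Longrightarrow> rt (c \<cdot> z) = rt z"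
proof -
  assume c: "c \<in> Cg" and z: "z \<in> carrier GC"
  from c have "c = gone \<or> c = s4" unfolding Cg_def by blast
  thus ?thesis using z rt_s4[OF z] G.l_one[OF z] by metis
qed

lemma rt_cases: "z \<in> carrier GC \<Longrightarrow> (z \<in> Cg \<and> rt z = gone) \<or> (z \<notin> Cg \<and> (rt z = z \<or> rt z = s4 \<cdot> z))"
  using rt_C rt_nC unfolding orb_def by blast

lemma rt_car: "z \<in> carrier GC \<Longrightarrow> rt z \<in> carrier GC"
  using rt_cases[of z] by auto

lemma rt_nC2: "z \<in> carrier GC \<Longrightarrow> z \<notin> Cg \<Longrightarrow> rt z \<notin> Cg"
  using rt_cases[of z] s4_mulC[of z] by metis

lemma one_Cg: "gone \<in> Cg" unfolding Cg_def by simp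

lemma rt_ne1: "z \<in> carrier GC \<Longrightarrow> z \<notin> Cg \<Longrightarrow> rt z \<noteq> gone"
  using rt_nC2 one_Cg by metis

lemma rt_idem: "z \<in> carrier GC \<Longrightarrow> rt (rt z) = rt z"
proof -
  assume z: "z \<in> carrier GC"
  show ?thesis using rt_cases[OF z]
  proof (elim disjE conjE)
    assume "rt z = gone" thus ?thesis using rt_C[OF one_Cg] by simp
  next
    assume "rt z = z" thus ?thesis by simp
  next
    assume h: "rt z = s4 \<cdot> z"
    have "rt (s4 \<cdot> z) = rt z" by (rule rt_s4[OF z])
    thus ?thesis using h by simp
  qed
qed

lemma cp_rt: "z \<in> carrier GC \<Longrightarrow> cp z \<cdot> rt z = z"
  unfolding cp_def using rt_car by (simp add: G.m_assoc)

lemma cp_C: "z \<in> carrier GC \<Longrightarrow> cp z \<in> Cg"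
proof -
  assume z: "z \<in> carrier GC"
  show ?thesis using rt_cases[OF z]
  proof (elim disjE conjE)
    assume "z \<in> Cg" "rt z = gone" thus ?thesis unfolding cp_def using z by simp
  next
    assume "rt z = z" thus ?thesis unfolding cp_def using z one_Cg by simp
  next
    assume "rt z = s4 \<cdot> z"
    hence "cp z = z \<cdot> (gi z \<cdot> gi s4)" unfolding cp_def using z by (simp add: G.inv_mult_group)
    also have "\<dots> = s4" using z by (simp add: G.m_assoc[symmetric] inv_s4)
    finally show ?thesis unfolding Cg_def by simp
  qed
qed

lemma cp_car: "z \<in> carrier GC \<Longrightarrow> cp z \<in> carrier GC"
  using cp_C Cg_car by blast

definition LL :: "bool \<Rightarrow> (vtx \<times> nat) set" where
  "LL b = (if b then insert (Vs,4) {(Vt,i) | i. i \<in> {1..4}} else {(Vs,i) | i. i \<in> {1..4}})"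
definition grp where "grp b = cls ` lists (LL b)"

lemma LL_Gens: "LL b \<subseteq> Gens" unfolding LL_def Gens_def by auto

lemma grp_car: "grp b \<subseteq> carrier GC"
  unfolding grp_def carrier_GC using LL_Gens by (meson image_mono lists_mono)

lemma grp_mult: "x \<in> grp b \<Longrightarrow> y \<in> grp b \<Longrightarrow> x \<cdot> y \<in> grp b"
proof -
  assume "x \<in> grp b" "y \<in> grp b"
  then obtain u v where "u \<in> lists (LL b)" "v \<in> lists (LL b)" "x = cls u" "y = cls v"
    unfolding grp_def by blast
  moreover have "u \<in> lists Gens" "v \<in> lists Gens" using calculation LL_Gens by auto
  ultimately show ?thesis unfolding grp_def by (simp add: mult_cls)
qed

lemma grp_one: "gone \<in> grp b" unfolding grp_def one_GC by auto

lemma s4_grp: "s4 \<in> grp b"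
proof -
  have "(Vs,4) \<in> LL b" unfolding LL_def by auto
  thus ?thesis unfolding grp_def s4_def by (metis image_eqI lists.Cons lists.Nil)
qed

lemma Cg_grp: "Cg \<subseteq> grp b" unfolding Cg_def using grp_one s4_grp by auto

lemma rt_grp: "z \<in> grp b \<Longrightarrow> rt z \<in> grp b"
proof -
  assume z: "z \<in> grp b"
  hence zc: "z \<in> carrier GC" using grp_car by blast
  have "s4 \<cdot> z \<in> grp b" using grp_mult[OF s4_grp z] .
  thus ?thesis using rt_cases[OF zc] z grp_one by metis
qed

lemma grp_inv: "x \<in> grp b \<Longrightarrow> gi x \<in> grp b"
proof -
  assume "x \<in> grp b"
  then obtain u where "u \<in> lists (LL b)" "x = cls u" unfolding grp_def by blast
  moreover have "u \<in> lists Gens" using calculation LL_Gens by auto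
  moreover have "rev u \<in> lists (LL b)" using calculation by auto
  ultimately show ?thesis unfolding grp_def by (simp add: inv_cls)
qed


type_synonym el = "(vtx \<times> nat) list set"
type_synonym pt = "el \<times> (bool \<times> el) list"

definition stp :: "bool \<Rightarrow> el \<Rightarrow> (bool \<times> el) list \<Rightarrow> pt" where
  "stp b z ys = (cp z, if rt z = gone then ys else (b, rt z) # ys)"

fun act :: "bool \<Rightarrow> el \<Rightarrow> pt \<Rightarrow> pt" where
  "act b y (c, []) = stp b (y \<cdot> c) []"
| "act b y (c, (b', t) # rest) =
     (if b' = b then stp b (y \<cdot> c \<cdot> t) rest else stp b (y \<cdot> c) ((b', t) # rest))"

definition hdtag :: "(bool \<times> el) list \<Rightarrow> bool option" where
  "hdtag ys = (if ys = [] then None else Some (fst (hd ys)))"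

fun alt :: "(bool \<times> el) list \<Rightarrow> bool" where
  "alt (x # y # r) = (fst x \<noteq> fst y \<and> alt (y # r))"
| "alt _ = True"

lemma alt_Cons: "alt (e # ys) \<longleftrightarrow> hdtag ys \<noteq> Some (fst e) \<and> alt ys"
  by (cases ys) (auto simp: hdtag_def)

lemma alt_append: "alt (xs @ ys) \<longleftrightarrow> alt xs \<and> alt ys \<and> (xs \<noteq> [] \<and> ys \<noteq> [] \<longrightarrow> fst (last xs) \<noteq> fst (hd ys))"
  by (induction xs rule: alt.induct) (auto simp: alt_Cons hdtag_def)

definition vent :: "bool \<times> el \<Rightarrow> bool" where
  "vent e = (snd e \<in> grp (fst e) \<and> rt (snd e) = snd e \<and> snd e \<noteq> gone)"

definition valid :: "pt \<Rightarrow> bool" where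
  "valid x = (fst x \<in> Cg \<and> alt (snd x) \<and> (\<forall>e\<in>set (snd x). vent e))"

lemma vent_car: "vent e \<Longrightarrow> snd e \<in> carrier GC"
  unfolding vent_def using grp_car by blast

lemma vent_nC: "vent e \<Longrightarrow> snd e \<notin> Cg"
  unfolding vent_def using rt_C by metis

lemma act_nb: "hdtag ys \<noteq> Some b \<Longrightarrow> act b y (c, ys) = stp b (y \<cdot> c) ys"
  by (cases ys) (auto simp: hdtag_def)

lemma act_b: "act b y (c, (b,t) # rest) = stp b (y \<cdot> c \<cdot> t) rest"
  by simp

lemma act_stp: "hdtag ys \<noteq> Some b \<Longrightarrow> z \<in> carrier GC \<Longrightarrow> y \<in> carrier GC \<Longrightarrow>
    act b y (stp b z ys) = stp b (y \<cdot> z) ys"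
proof (cases "rt z = gone")
  case True
  assume "hdtag ys \<noteq> Some b" "z \<in> carrier GC" "y \<in> carrier GC"
  moreover have "cp z = z" unfolding cp_def using True calculation by simp
  ultimately show ?thesis unfolding stp_def[of b z] using True act_nb by simp
next
  case False
  assume "hdtag ys \<noteq> Some b" "z \<in> carrier GC" "y \<in> carrier GC"
  hence "act b y (stp b z ys) = stp b (y \<cdot> cp z \<cdot> rt z) ys" unfolding stp_def[of b z] using False by simp
  also have "y \<cdot> cp z \<cdot> rt z = y \<cdot> z" using cp_rt cp_car rt_car \<open>z \<in> carrier GC\<close> \<open>y \<in> carrier GC\<close>
    by (simp add: G.m_assoc)
  finally show ?thesis .
qed

lemma valid_car: "valid (c, xs) \<Longrightarrow> c \<in> carrier GC"
  unfolding valid_def using Cg_car by auto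

lemma act_comp: "valid x \<Longrightarrow> y1 \<in> carrier GC \<Longrightarrow> y2 \<in> carrier GC \<Longrightarrow>
   act b y1 (act b y2 x) = act b (y1 \<cdot> y2) x"
proof -
  assume v: "valid x" and y: "y1 \<in> carrier GC" "y2 \<in> carrier GC"
  obtain c xs where x: "x = (c, xs)" by fastforce
  have c: "c \<in> carrier GC" using v x valid_car by blast
  show ?thesis
  proof (cases "hdtag xs = Some b")
    case True
    then obtain t rest where xs: "xs = (b,t) # rest" unfolding hdtag_def
      by (cases xs) auto
    have "hdtag rest \<noteq> Some b" using v x xs unfolding valid_def by (simp add: alt_Cons)
    moreover have t: "t \<in> carrier GC" using v x xs vent_car unfolding valid_def by fastforce
    ultimately show ?thesis using x xs act_stp c y by (simp add: G.m_assoc)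
  next
    case False
    thus ?thesis using x act_nb act_stp c y by (simp add: G.m_assoc)
  qed
qed

lemma act_C: "valid x \<Longrightarrow> c0 \<in> Cg \<Longrightarrow> act b c0 x = (c0 \<cdot> fst x, snd x)"
proof -
  assume v: "valid x" and c0: "c0 \<in> Cg"
  obtain c xs where x: "x = (c, xs)" by fastforce
  have cC: "c \<in> Cg" using v x unfolding valid_def by simp
  have cc: "c0 \<cdot> c \<in> Cg" using Cg_mult c0 cC .
  have ccar: "c0 \<cdot> c \<in> carrier GC" using cc Cg_car by blast
  show ?thesis
  proof (cases "hdtag xs = Some b")
    case True
    then obtain t rest where xs: "xs = (b,t) # rest" unfolding hdtag_def
      by (cases xs) auto
    have ve: "vent (b,t)" using v x xs unfolding valid_def by simp
    have t: "t \<in> carrier GC" "rt t = t" "t \<noteq> gone" using vent_car[OF ve] ve unfolding vent_def by auto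
    have "rt (c0 \<cdot> c \<cdot> t) = t" using rt_mulC[OF cc t(1)] t by simp
    moreover have "cp (c0 \<cdot> c \<cdot> t) = c0 \<cdot> c" unfolding cp_def using calculation t ccar
      by (simp add: G.m_assoc)
    ultimately show ?thesis using x xs t by (simp add: stp_def)
  next
    case False
    have "rt (c0 \<cdot> c) = gone" using rt_C[OF cc] .
    moreover have "cp (c0 \<cdot> c) = c0 \<cdot> c" unfolding cp_def using calculation ccar by simp
    ultimately show ?thesis using x False act_nb by (simp add: stp_def)
  qed
qed

lemma act_one: "valid x \<Longrightarrow> act b gone x = x"
proof -
  assume v: "valid x"
  obtain c xs where x: "x = (c, xs)" by fastforce
  have "c \<in> carrier GC" using v x valid_car by blast
  thus ?thesis using act_C[OF v one_Cg, of b] x by simp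
qed

lemma valid_stp: "z \<in> grp b \<Longrightarrow> alt ys \<Longrightarrow> \<forall>e\<in>set ys. vent e \<Longrightarrow> hdtag ys \<noteq> Some b
   \<Longrightarrow> valid (stp b z ys)"
proof -
  assume z: "z \<in> grp b" and ys: "alt ys" "\<forall>e\<in>set ys. vent e" "hdtag ys \<noteq> Some b"
  have zc: "z \<in> carrier GC" using z grp_car by blast
  have "cp z \<in> Cg" using cp_C[OF zc] .
  moreover have "rt z \<noteq> gone \<Longrightarrow> vent (b, rt z)"
    unfolding vent_def using rt_grp[OF z] rt_idem[OF zc] by simp
  ultimately show ?thesis unfolding valid_def stp_def using ys by (simp add: alt_Cons)
qed

lemma valid_act: "valid x \<Longrightarrow> y \<in> grp b \<Longrightarrow> valid (act b y x)"
proof -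
  assume v: "valid x" and y: "y \<in> grp b"
  obtain c xs where x: "x = (c, xs)" by fastforce
  have cC: "c \<in> grp b" using v x Cg_grp unfolding valid_def by auto
  show ?thesis
  proof (cases "hdtag xs = Some b")
    case True
    then obtain t rest where xs: "xs = (b,t) # rest" unfolding hdtag_def
      by (cases xs) auto
    have "t \<in> grp b" using v x xs unfolding valid_def vent_def by simp
    hence "y \<cdot> c \<cdot> t \<in> grp b" using grp_mult y cC by blast
    moreover have "alt rest" "hdtag rest \<noteq> Some b" "\<forall>e\<in>set rest. vent e"
      using v x xs unfolding valid_def by (auto simp: alt_Cons)
    ultimately show ?thesis using x xs valid_stp by simp
  next
    case False
    have "y \<cdot> c \<in> grp b" using grp_mult y cC by blast
    moreover have "alt xs" "\<forall>e\<in>set xs. vent e" using v x unfolding valid_def by auto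
    ultimately show ?thesis using x False act_nb valid_stp by simp
  qed
qed

definition prodl :: "(bool \<times> el) list \<Rightarrow> el" where
  "prodl xs = foldr (\<lambda>e acc. snd e \<cdot> acc) xs gone"

lemma prodl_simps[simp]: "prodl [] = gone" "prodl (e # xs) = snd e \<cdot> prodl xs"
  unfolding prodl_def by auto

lemma prodl_car: "\<forall>e\<in>set xs. snd e \<in> carrier GC \<Longrightarrow> prodl xs \<in> carrier GC"
  by (induction xs) auto

lemma prodl_append: "\<forall>e\<in>set xs. snd e \<in> carrier GC \<Longrightarrow> \<forall>e\<in>set ys. snd e \<in> carrier GC \<Longrightarrow>
   prodl (xs @ ys) = prodl xs \<cdot> prodl ys"
  by (induction xs) (auto simp: G.m_assoc prodl_car)

definition rep :: "pt \<Rightarrow> el" where "rep x = fst x \<cdot> prodl (snd x)"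

lemma valid_ecar: "valid x \<Longrightarrow> \<forall>e\<in>set (snd x). snd e \<in> carrier GC"
  unfolding valid_def using vent_car by blast

lemma rep_car: "valid x \<Longrightarrow> rep x \<in> carrier GC"
  unfolding rep_def using valid_ecar prodl_car valid_car by (cases x) auto

lemma rep_stp: "z \<in> carrier GC \<Longrightarrow> \<forall>e\<in>set ys. snd e \<in> carrier GC \<Longrightarrow>
   rep (stp b z ys) = z \<cdot> prodl ys"
proof (cases "rt z = gone")
  case True
  assume "z \<in> carrier GC" "\<forall>e\<in>set ys. snd e \<in> carrier GC"
  moreover have "cp z = z" unfolding cp_def using True calculation by simp
  ultimately show ?thesis unfolding stp_def rep_def using True by simp
next
  case False
  assume z: "z \<in> carrier GC" and ys: "\<forall>e\<in>set ys. snd e \<in> carrier GC"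
  have "rep (stp b z ys) = cp z \<cdot> (rt z \<cdot> prodl ys)" unfolding stp_def rep_def using False by simp
  also have "\<dots> = (cp z \<cdot> rt z) \<cdot> prodl ys" using cp_car rt_car z prodl_car ys by (simp add: G.m_assoc)
  finally show ?thesis using cp_rt z by simp
qed

lemma rep_act: "valid x \<Longrightarrow> y \<in> carrier GC \<Longrightarrow> rep (act b y x) = y \<cdot> rep x"
proof -
  assume v: "valid x" and y: "y \<in> carrier GC"
  obtain c xs where x: "x = (c, xs)" by fastforce
  have c: "c \<in> carrier GC" using v x valid_car by blast
  have ec: "\<forall>e\<in>set xs. snd e \<in> carrier GC" using valid_ecar v x by auto
  show ?thesis
  proof (cases "hdtag xs = Some b")
    case True
    then obtain t rest where xs: "xs = (b,t) # rest" unfolding hdtag_def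
      by (cases xs) auto
    have t: "t \<in> carrier GC" using ec xs by auto
    have r: "\<forall>e\<in>set rest. snd e \<in> carrier GC" using ec xs by auto
    show ?thesis using x xs rep_stp[of "y \<cdot> c \<cdot> t" rest b] t r c y prodl_car[OF r]
      unfolding rep_def by (simp add: G.m_assoc)
  next
    case False
    show ?thesis using x False act_nb rep_stp[of "y \<cdot> c" xs b] ec c y prodl_car[OF ec]
      unfolding rep_def by (simp add: G.m_assoc)
  qed
qed


definition lact :: "vtx \<times> nat \<Rightarrow> pt \<Rightarrow> pt" where
  "lact l = act (fst l = Vt) (cls [l])"

primrec actW :: "(vtx \<times> nat) list \<Rightarrow> pt \<Rightarrow> pt" where
  "actW [] x = x"
| "actW (l # w) x = lact l (actW w x)"

lemma letter_grp: "l \<in> Gens \<Longrightarrow> cls [l] \<in> grp (fst l = Vt)"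
proof -
  assume "l \<in> Gens"
  then obtain v i where l: "l = (v,i)" "i \<in> {1..4}" unfolding Gens_def by auto
  hence "l \<in> LL (fst l = Vt)" unfolding LL_def by (cases v) auto
  thus ?thesis unfolding grp_def by (metis image_eqI lists.Cons lists.Nil)
qed

lemma valid_actW: "w \<in> lists Gens \<Longrightarrow> valid x \<Longrightarrow> valid (actW w x)"
  by (induction w) (auto simp: lact_def intro!: valid_act letter_grp)

lemma actW_append: "actW (u @ v) x = actW u (actW v x)"
  by (induction u) auto

lemma LL_Gens': "w \<in> lists (LL b) \<Longrightarrow> w \<in> lists Gens"
  using LL_Gens by auto

lemma actW_grp: "w \<in> lists (LL b) \<Longrightarrow> valid x \<Longrightarrow> actW w x = act b (cls w) x"
proof (induction w)
  case Nil thus ?case using act_one by (simp add: one_GC[symmetric])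
next
  case (Cons l w)
  have l: "l \<in> LL b" and w: "w \<in> lists (LL b)" using Cons.prems by auto
  have lG: "l \<in> Gens" using l LL_Gens by auto
  have wG: "w \<in> lists Gens" using w LL_Gens by auto
  have wgrp: "cls w \<in> grp b" unfolding grp_def using w by auto
  define x' where "x' = act b (cls w) x"
  have vx': "valid x'" unfolding x'_def using valid_act Cons.prems(2) wgrp by blast
  have "actW (l # w) x = lact l x'" using Cons x'_def by simp
  also have "lact l x' = act b (cls [l]) x'"
  proof (cases "(fst l = Vt) = b")
    case True thus ?thesis unfolding lact_def by simp
  next
    case False
    have "b = True \<and> l = (Vs,4)" using False l unfolding LL_def by (auto split: if_splits)
    hence "cls [l] = s4" "b" unfolding s4_def by auto
    moreover have "s4 \<in> Cg" unfolding Cg_def by simp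
    ultimately show ?thesis unfolding lact_def using act_C[OF vx'] by simp
  qed
  also have "\<dots> = act b (cls [l] \<cdot> cls w) x" unfolding x'_def
    using act_comp[OF Cons.prems(2)] lG wG carrier_GC by auto
  also have "cls [l] \<cdot> cls w = cls (l # w)" using lG wG mult_cls[of "[l]" w] by simp
  finally show ?case .
qed

lemma Rels_shape: "r \<in> Rels \<Longrightarrow> (\<exists>v. r \<in> lists {(v,i) | i. i \<in> {1..4}}) \<or> set r \<subseteq> {(Vs,4),(Vt,4)}"
  unfolding Rels_def
  apply (elim UnE; simp only: mem_Collect_eq; elim exE conjE)
     apply (rule disjI1, rule_tac x=v in exI, force)
    apply (rule disjI1, rule_tac x=v in exI, force simp: numeral_eq_Suc)
   apply (rule disjI1, rule_tac x=v in exI, force simp: numeral_eq_Suc)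
  apply (rule disjI2)
  apply (case_tac v; case_tac w; simp add: numeral_eq_Suc)
  done

lemma Rels_split: "r \<in> Rels \<Longrightarrow> r \<in> lists (LL False) \<or> r \<in> lists (LL True)"
proof -
  assume "r \<in> Rels"
  from Rels_shape[OF this] show ?thesis
  proof
    assume "\<exists>v. r \<in> lists {(v,i) | i. i \<in> {1..4}}"
    then obtain v where v: "r \<in> lists {(v,i) | i. i \<in> {1..4}}" by blast
    show ?thesis
    proof (cases v)
      case Vs
      hence "{(v,i) | i. i \<in> {1..4}} \<subseteq> LL False" unfolding LL_def by auto
      thus ?thesis using v by (meson lists_mono subsetD)
    next
      case Vt
      hence "{(v,i) | i. i \<in> {1..4}} \<subseteq> LL True" unfolding LL_def by auto
      thus ?thesis using v by (meson lists_mono subsetD)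
    qed
  next
    assume "set r \<subseteq> {(Vs,4),(Vt,4)}"
    moreover have "{(Vs,4),(Vt,4)} \<subseteq> LL True" unfolding LL_def by auto
    ultimately show ?thesis by auto
  qed
qed

lemma Rels_one: "r \<in> Rels \<Longrightarrow> cls r = gone"
proof -
  assume r: "r \<in> Rels"
  have "([]@r@[], []@[]) \<in> rstep"
    unfolding rstep_def mem_Collect_eq using r
    by (rule_tac x="[]" in exI, rule_tac x="r" in exI, rule_tac x="[]" in exI) auto
  thus ?thesis unfolding one_GC by (simp add: cls_eq rstep_weq)
qed

lemma actW_rel: "r \<in> Rels \<Longrightarrow> valid x \<Longrightarrow> actW r x = x"
  using Rels_split[of r] actW_grp Rels_one act_one by metis

lemma actW_rstep: "(y,z) \<in> rstep \<Longrightarrow> valid x \<Longrightarrow> actW y x = actW z x"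
proof -
  assume "(y,z) \<in> rstep" and v: "valid x"
  then obtain u r w where "y = u@r@w" "z = u@w" "u \<in> lists Gens" "w \<in> lists Gens" "r \<in> Rels"
    unfolding rstep_def by blast
  thus ?thesis using actW_append actW_rel valid_actW v by metis
qed

lemma actW_weq: "(y,z) \<in> weq \<Longrightarrow> valid x \<Longrightarrow> actW y x = actW z x"
  unfolding weq_def
proof (induction rule: rtrancl_induct)
  case base thus ?case by simp
next
  case (step z1 z2)
  from step.hyps(2) have "(z1,z2) \<in> rstep \<or> (z2,z1) \<in> rstep" by auto
  hence "actW z1 x = actW z2 x" using actW_rstep[OF _ step.prems] by metis
  thus ?case using step.IH step.prems by simp
qed

lemma rep_actW: "w \<in> lists Gens \<Longrightarrow> valid x \<Longrightarrow> rep (actW w x) = cls w \<cdot> rep x"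
proof (induction w)
  case Nil thus ?case using rep_car by (simp add: one_GC[symmetric])
next
  case (Cons l w)
  have lG: "l \<in> Gens" and wG: "w \<in> lists Gens" using Cons.prems by auto
  have lc: "cls [l] \<in> carrier GC" using lG carrier_GC by auto
  have "rep (actW (l # w) x) = rep (act (fst l = Vt) (cls [l]) (actW w x))" by (simp add: lact_def)
  also have "\<dots> = cls [l] \<cdot> rep (actW w x)"
    by (rule rep_act[OF valid_actW[OF wG Cons.prems(2)] lc])
  finally have "rep (actW (l # w) x) = cls [l] \<cdot> rep (actW w x)" .
  also have "\<dots> = cls [l] \<cdot> (cls w \<cdot> rep x)" using Cons by simp
  also have "\<dots> = (cls [l] \<cdot> cls w) \<cdot> rep x"
    by (rule G.m_assoc[symmetric]) (use lc wG rep_car[OF Cons.prems(2)] carrier_GC in auto)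
  also have "\<dots> = cls (l # w) \<cdot> rep x" using lG wG mult_cls[of "[l]" w] by simp
  finally show ?case .
qed

definition gact :: "el \<Rightarrow> pt \<Rightarrow> pt" where
  "gact g x = actW (SOME w. w \<in> lists Gens \<and> cls w = g) x"

lemma gact_cls: "w \<in> lists Gens \<Longrightarrow> valid x \<Longrightarrow> gact (cls w) x = actW w x"
proof -
  assume w: "w \<in> lists Gens" and v: "valid x"
  define w' where "w' = (SOME w'. w' \<in> lists Gens \<and> cls w' = cls w)"
  have "w' \<in> lists Gens \<and> cls w' = cls w" unfolding w'_def by (rule someI[of _ w]) (use w in simp)
  hence "(w', w) \<in> weq" using cls_eq by blast
  thus ?thesis unfolding gact_def w'_def[symmetric] using actW_weq v by blast
qed

lemma car_cls: "g \<in> carrier GC \<Longrightarrow> \<exists>w\<in>lists Gens. g = cls w"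
  unfolding carrier_GC by auto

lemma valid_gact: "g \<in> carrier GC \<Longrightarrow> valid x \<Longrightarrow> valid (gact g x)"
  using car_cls gact_cls valid_actW by metis

lemma gact_mult: "g \<in> carrier GC \<Longrightarrow> h \<in> carrier GC \<Longrightarrow> valid x \<Longrightarrow> gact (g \<cdot> h) x = gact g (gact h x)"
proof -
  assume "g \<in> carrier GC" "h \<in> carrier GC" and v: "valid x"
  then obtain u w where uw: "u \<in> lists Gens" "w \<in> lists Gens" "g = cls u" "h = cls w"
    using car_cls by metis
  hence "g \<cdot> h = cls (u @ w)" using mult_cls by simp
  thus ?thesis using uw v gact_cls actW_append valid_actW by (simp)
qed

lemma gact_grp: "y \<in> grp b \<Longrightarrow> valid x \<Longrightarrow> gact y x = act b y x"
proof -
  assume "y \<in> grp b" "valid x"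
  then obtain w where "w \<in> lists (LL b)" "y = cls w" unfolding grp_def by blast
  thus ?thesis using gact_cls LL_Gens' actW_grp \<open>valid x\<close> by metis
qed

lemma rep_gact: "g \<in> carrier GC \<Longrightarrow> valid x \<Longrightarrow> rep (gact g x) = g \<cdot> rep x"
  using car_cls gact_cls rep_actW by metis


definition e0 :: pt where "e0 = (gone, [])"

lemma valid_e0: "valid e0" unfolding e0_def valid_def using one_Cg by simp

lemma rep_e0: "rep e0 = gone" unfolding e0_def rep_def by simp

lemma gact_one: "valid x \<Longrightarrow> gact gone x = x"
  using gact_cls[of "[]" x] by (simp add: one_GC)

lemma hdtag_map: "map fst l1 = map fst l2 \<Longrightarrow> hdtag l1 = hdtag l2"
  unfolding hdtag_def by (cases l1; cases l2) auto

lemma prodl_grp: "\<forall>e\<in>set xs. snd e \<in> grp b \<Longrightarrow> prodl xs \<in> grp b"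
  by (induction xs) (auto simp: grp_one grp_mult)

lemma build: "valid (gone, xs) \<Longrightarrow> gact (prodl xs) e0 = (gone, xs)"
proof (induction xs)
  case Nil thus ?case using gact_one valid_e0 by (simp add: e0_def)
next
  case (Cons e rest)
  obtain b t where e: "e = (b,t)" by fastforce
  have vr: "valid (gone, rest)" using Cons.prems unfolding valid_def by (simp add: alt_Cons)
  have ht: "hdtag rest \<noteq> Some b" using Cons.prems e unfolding valid_def by (simp add: alt_Cons)
  have ve: "vent (b,t)" using Cons.prems e unfolding valid_def by simp
  hence tg: "t \<in> grp b" and tr: "rt t = t" and t1: "t \<noteq> gone" unfolding vent_def by auto
  have tc: "t \<in> carrier GC" using tg grp_car by blast
  have pc: "prodl rest \<in> carrier GC" using valid_ecar[OF vr] prodl_car by simp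
  have "gact (prodl (e # rest)) e0 = gact t (gact (prodl rest) e0)"
    using e gact_mult[OF tc pc valid_e0] by simp
  also have "\<dots> = act b t (gone, rest)" using Cons.IH[OF vr] gact_grp[OF tg vr] by simp
  also have "\<dots> = stp b t rest" using act_nb[OF ht] tc by simp
  also have "\<dots> = (gone, (b,t) # rest)" unfolding stp_def cp_def using tr t1 tc by simp
  finally show ?case using e by simp
qed

lemma lastpres: "valid (c, ys) \<Longrightarrow> ys \<noteq> [] \<Longrightarrow> alt (ms @ ys) \<Longrightarrow> \<forall>e\<in>set ms. vent e \<Longrightarrow>
  \<exists>c' zs. gact (prodl ms) (c, ys) = (c', zs @ ys) \<and> map fst zs = map fst ms"
proof (induction ms)
  case Nil thus ?case using gact_one by simp
next
  case (Cons e rest)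
  obtain b t where e: "e = (b,t)" by fastforce
  have "alt (rest @ ys)" using Cons.prems(3) by (simp add: alt_Cons)
  then obtain c' zs where IH: "gact (prodl rest) (c, ys) = (c', zs @ ys)" "map fst zs = map fst rest"
    using Cons by auto
  have ve: "vent (b,t)" using Cons.prems e by simp
  hence tg: "t \<in> grp b" unfolding vent_def by auto
  have tc: "t \<in> carrier GC" using tg grp_car by blast
  have tnC: "t \<notin> Cg" using vent_nC[OF ve] by simp
  have rc: "\<forall>e\<in>set rest. snd e \<in> carrier GC" using Cons.prems(4) vent_car by auto
  have pc: "prodl rest \<in> carrier GC" using prodl_car[OF rc] .
  have vx: "valid (c', zs @ ys)" using valid_gact[OF pc Cons.prems(1)] IH by simp
  hence c'C: "c' \<in> Cg" unfolding valid_def by simp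
  have c'c: "c' \<in> carrier GC" using c'C Cg_car by blast
  have "hdtag (rest @ ys) \<noteq> Some b" using Cons.prems(3) e by (simp add: alt_Cons)
  moreover have "map fst (zs @ ys) = map fst (rest @ ys)" using IH by simp
  ultimately have ht: "hdtag (zs @ ys) \<noteq> Some b" using hdtag_map by metis
  have tcnC: "t \<cdot> c' \<notin> Cg"
  proof
    assume "t \<cdot> c' \<in> Cg"
    hence "t \<cdot> c' \<cdot> gi c' \<in> Cg" using Cg_mult Cg_inv c'C by blast
    moreover have "t \<cdot> c' \<cdot> gi c' = t" using tc c'c by (simp add: G.m_assoc)
    ultimately show False using tnC by simp
  qed
  have tcc: "t \<cdot> c' \<in> carrier GC" using tc c'c by simp
  have "gact (prodl (e # rest)) (c, ys) = gact t (gact (prodl rest) (c, ys))"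
    using e gact_mult[OF tc pc Cons.prems(1)] by simp
  also have "\<dots> = act b t (c', zs @ ys)" using IH gact_grp[OF tg vx] by simp
  also have "\<dots> = stp b (t \<cdot> c') (zs @ ys)" using act_nb[OF ht] by simp
  also have "\<dots> = (cp (t \<cdot> c'), ((b, rt (t \<cdot> c')) # zs) @ ys)"
    unfolding stp_def using rt_ne1[OF tcc tcnC] by simp
  finally show ?case using e IH by (intro exI[of _ "cp (t \<cdot> c')"] exI[of _ "(b, rt (t \<cdot> c')) # zs"]) simp
qed

lemma split3: fixes xs :: "(bool \<times> el) list" shows "\<exists>e\<in>set xs. fst e \<Longrightarrow> \<exists>pre ms suf. xs = pre @ ms @ suf \<and> ms \<noteq> [] \<and> fst (hd ms) \<and>
   fst (last ms) \<and> (\<forall>e\<in>set pre. \<not> fst e) \<and> (\<forall>e\<in>set suf. \<not> fst e)"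
proof -
  assume ex: "\<exists>e\<in>set xs. fst e"
  define P where "P = (\<lambda>e::bool \<times> el. \<not> fst e)"
  define pre where "pre = takeWhile P xs"
  define r where "r = dropWhile P xs"
  have xs: "xs = pre @ r" unfolding pre_def r_def by simp
  have rne: "r \<noteq> []" unfolding r_def P_def using ex by (simp add: dropWhile_eq_Nil_conv)
  have hr: "fst (hd r)" using hd_dropWhile[OF rne[unfolded r_def]] unfolding r_def P_def by simp
  define suf where "suf = rev (takeWhile P (rev r))"
  define ms where "ms = rev (dropWhile P (rev r))"
  have r: "r = ms @ suf" unfolding ms_def suf_def
    by (metis rev_append rev_rev_ident takeWhile_dropWhile_id)
  have "hd r \<in> set (rev r)" using rne by simp
  hence dne: "dropWhile P (rev r) \<noteq> []" using hr unfolding P_def by (auto simp: dropWhile_eq_Nil_conv)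
  hence msne: "ms \<noteq> []" unfolding ms_def by simp
  have "last ms = hd (dropWhile P (rev r))" unfolding ms_def using dne by (simp add: last_rev)
  hence lm: "fst (last ms)" using hd_dropWhile[OF dne] unfolding P_def by simp
  have "hd ms = hd r" using r msne by simp
  hence hm: "fst (hd ms)" using hr by simp
  have "\<forall>e\<in>set pre. \<not> fst e" unfolding pre_def P_def by (auto dest: set_takeWhileD)
  moreover have "\<forall>e\<in>set suf. \<not> fst e" unfolding suf_def P_def by (auto dest: set_takeWhileD)
  ultimately show ?thesis using xs r msne hm lm by blast
qed

lemma (in group) conj_aux:
  assumes c: "p \<in> carrier G" "m \<in> carrier G" "q \<in> carrier G" "a \<in> carrier G"
    and e: "p \<otimes> m \<otimes> q \<otimes> a = a \<otimes> (p \<otimes> m \<otimes> q)"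
  shows "m \<otimes> (q \<otimes> a \<otimes> inv q) = (inv p \<otimes> a \<otimes> p) \<otimes> m"
proof -
  have l1: "x \<in> carrier G \<Longrightarrow> inv p \<otimes> (p \<otimes> x) = x" for x using c by (simp add: m_assoc[symmetric])
  have "m \<otimes> (q \<otimes> a \<otimes> inv q) = inv p \<otimes> (p \<otimes> m \<otimes> q \<otimes> a) \<otimes> inv q" using c by (simp add: m_assoc l1)
  also have "\<dots> = inv p \<otimes> (a \<otimes> (p \<otimes> m \<otimes> q)) \<otimes> inv q" using e by simp
  also have "\<dots> = (inv p \<otimes> a \<otimes> p) \<otimes> m" using c by (simp add: m_assoc)
  finally show ?thesis .
qed

lemma notC_conj: "w \<in> lists Gens \<Longrightarrow> even (length w) \<Longrightarrow> cls w \<noteq> gone \<Longrightarrow> v \<in> lists Gens \<Longrightarrow>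
   cls v \<cdot> cls w \<cdot> gi (cls v) \<notin> Cg"
proof
  assume w: "w \<in> lists Gens" "even (length w)" "cls w \<noteq> gone" and v: "v \<in> lists Gens"
    and C: "cls v \<cdot> cls w \<cdot> gi (cls v) \<in> Cg"
  have rv: "rev v \<in> lists Gens" using v by auto
  have vc: "cls v \<in> carrier GC" "cls w \<in> carrier GC" using v w carrier_GC by auto
  have eq: "cls v \<cdot> cls w \<cdot> gi (cls v) = cls (v @ w @ rev v)"
    using v w rv by (simp add: inv_cls mult_cls)
  from C have "cls v \<cdot> cls w \<cdot> gi (cls v) = gone \<or> cls v \<cdot> cls w \<cdot> gi (cls v) = s4"
    unfolding Cg_def by blast
  thus False
  proof
    assume h: "cls v \<cdot> cls w \<cdot> gi (cls v) = gone"
    have "cls v \<cdot> cls w = gone \<cdot> cls v"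
      using G.inv_solve_right[of gone "cls v \<cdot> cls w" "cls v"] h vc by simp
    hence "cls v \<cdot> cls w = cls v" using vc by simp
    thus False using w vc G.r_cancel_one by simp
  next
    assume h: "cls v \<cdot> cls w \<cdot> gi (cls v) = s4"
    hence "(v @ w @ rev v, [(Vs,4)]) \<in> weq" using eq unfolding s4_def by (simp add: cls_eq)
    hence "even (length (v @ w @ rev v)) = even (length [(Vs,4::nat)])" by (rule weq_parity)
    thus False using w by simp
  qed
qed

lemma lists_S5: "w \<in> lists (LL False) \<Longrightarrow> cls w \<in> S5s"
proof (induction w)
  case Nil thus ?case unfolding S5s_def using generate.one[of GC] one_GC by simp
next
  case (Cons l w)
  have "l \<in> LL False" "w \<in> lists (LL False)" using Cons.prems by auto
  hence lG: "l \<in> Gens" "w \<in> lists Gens" using LL_Gens LL_Gens' by blast+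
  have "cls [l] \<in> {cls [(Vs, i)] | i. i \<in> {1..4}}" using Cons.prems unfolding LL_def by auto
  hence "cls [l] \<in> S5s" unfolding S5s_def by (rule generate.incl)
  hence "cls [l] \<cdot> cls w \<in> S5s" using Cons unfolding S5s_def by (auto intro: generate.eng)
  thus ?case using mult_cls[of "[l]" w] lG by simp
qed

lemma grp_S5: "x \<in> grp False \<Longrightarrow> x \<in> S5s"
  unfolding grp_def using lists_S5 by blast


theorem lemma4p24:
  assumes "a \<in> A5s"
    and "a \<otimes>\<^bsub>GC\<^esub> a = \<one>\<^bsub>GC\<^esub>"
    and "a \<noteq> \<one>\<^bsub>GC\<^esub>"
  shows "{g \<in> carrier GC. g \<otimes>\<^bsub>GC\<^esub> a = a \<otimes>\<^bsub>GC\<^esub> g} \<subseteq> S5s"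
proof
  fix g assume "g \<in> {g \<in> carrier GC. g \<otimes>\<^bsub>GC\<^esub> a = a \<otimes>\<^bsub>GC\<^esub> g}"
  hence gc: "g \<in> carrier GC" and comm: "g \<cdot> a = a \<cdot> g" by auto
  obtain w where w: "a = cls w" "w \<in> lists (LL False)" "even (length w)"
    using assms(1) unfolding A5s_def LL_def by auto
  have wG: "w \<in> lists Gens" using w LL_Gens' by blast
  have aF: "a \<in> grp False" unfolding grp_def using w by auto
  have ac: "a \<in> carrier GC" using aF grp_car by blast
  have a1: "cls w \<noteq> gone" using assms(3) w by simp
  obtain c xs where x: "gact g e0 = (c, xs)" by fastforce
  have vx: "valid (c, xs)" using valid_gact[OF gc valid_e0] x by simp
  have "rep (gact g e0) = g" using rep_gact[OF gc valid_e0] rep_e0 gc by simp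
  hence g: "g = c \<cdot> prodl xs" using x unfolding rep_def by simp
  have cC: "c \<in> Cg" using vx unfolding valid_def by simp
  have ev: "\<forall>e\<in>set xs. vent e" using vx unfolding valid_def by simp
  have ec: "\<forall>e\<in>set xs. snd e \<in> carrier GC" using ev vent_car by blast
  show "g \<in> S5s"
  proof (cases "\<exists>e\<in>set xs. fst e")
    case False
    have "\<forall>e\<in>set xs. snd e \<in> grp False"
    proof
      fix e assume "e \<in> set xs"
      hence "vent e" "\<not> fst e" using ev False by auto
      thus "snd e \<in> grp False" unfolding vent_def by (cases e) auto
    qed
    hence "prodl xs \<in> grp False" by (rule prodl_grp)
    moreover have "c \<in> grp False" using cC Cg_grp by blast
    ultimately have "g \<in> grp False" using g grp_mult by simp
    thus ?thesis by (rule grp_S5)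
  next
    case True
    then obtain pre ms suf where sp: "xs = pre @ ms @ suf" "ms \<noteq> []" "fst (hd ms)"
      "fst (last ms)" "\<forall>e\<in>set pre. \<not> fst e" "\<forall>e\<in>set suf. \<not> fst e"
      using split3 by blast
    have ecp: "\<forall>e\<in>set pre. snd e \<in> carrier GC" "\<forall>e\<in>set ms. snd e \<in> carrier GC"
      "\<forall>e\<in>set suf. snd e \<in> carrier GC" using ec sp(1) by auto
    have evm: "\<forall>e\<in>set ms. vent e" using ev sp(1) by auto
    have "\<forall>e\<in>set pre. snd e \<in> grp False"
    proof
      fix e assume "e \<in> set pre"
      hence "vent e" "\<not> fst e" using ev sp(1,5) by auto
      thus "snd e \<in> grp False" unfolding vent_def by (cases e) auto
    qed
    hence pF: "prodl pre \<in> grp False" by (rule prodl_grp)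
    have "\<forall>e\<in>set suf. snd e \<in> grp False"
    proof
      fix e assume "e \<in> set suf"
      hence "vent e" "\<not> fst e" using ev sp(1,6) by auto
      thus "snd e \<in> grp False" unfolding vent_def by (cases e) auto
    qed
    hence qF: "prodl suf \<in> grp False" by (rule prodl_grp)
    define p where "p = c \<cdot> prodl pre"
    define m where "m = prodl ms"
    define q where "q = prodl suf"
    have pF': "p \<in> grp False" unfolding p_def using pF cC Cg_grp grp_mult by blast
    have qF': "q \<in> grp False" unfolding q_def using qF .
    have pc: "p \<in> carrier GC" using pF' grp_car by blast
    have qc: "q \<in> carrier GC" using qF' grp_car by blast
    have mc: "m \<in> carrier GC" unfolding m_def using prodl_car ecp by blast
    have cc: "c \<in> carrier GC" using cC Cg_car by blast
    have "prodl (pre @ ms @ suf) = prodl pre \<cdot> prodl (ms @ suf)"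
      by (rule prodl_append) (use ecp in auto)
    moreover have "prodl (ms @ suf) = prodl ms \<cdot> prodl suf"
      by (rule prodl_append) (use ecp in auto)
    ultimately have "g = c \<cdot> (prodl pre \<cdot> (m \<cdot> q))"
      using g sp(1) unfolding m_def q_def by simp
    hence gpmq: "g = p \<cdot> m \<cdot> q" unfolding p_def using cc prodl_car[OF ecp(1)] mc qc
      by (simp add: G.m_assoc)
    have "p \<cdot> m \<cdot> q \<cdot> a = a \<cdot> (p \<cdot> m \<cdot> q)" using comm gpmq by simp
    hence key: "m \<cdot> (q \<cdot> a \<cdot> gi q) = (gi p \<cdot> a \<cdot> p) \<cdot> m"
      using G.conj_aux pc mc qc ac by blast
    define a1 where "a1 = q \<cdot> a \<cdot> gi q"
    define a2 where "a2 = gi p \<cdot> a \<cdot> p"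
    have a1F: "a1 \<in> grp False" unfolding a1_def using qF' aF grp_mult grp_inv by blast
    have a2F: "a2 \<in> grp False" unfolding a2_def using pF' aF grp_mult grp_inv by blast
    have a1c: "a1 \<in> carrier GC" using a1F grp_car by blast
    have a2c: "a2 \<in> carrier GC" using a2F grp_car by blast
    obtain qw where qw: "qw \<in> lists Gens" "q = cls qw" using car_cls qc by blast
    obtain pw where pw: "pw \<in> lists Gens" "p = cls pw" using car_cls pc by blast
    have a1nC: "a1 \<notin> Cg" unfolding a1_def using notC_conj[OF wG w(3) a1 qw(1)] qw w by simp
    have rpw: "rev pw \<in> lists Gens" using pw by auto
    have "gi p = cls (rev pw)" using pw inv_cls by auto
    moreover have "gi (cls (rev pw)) = p" using inv_cls[OF rpw] pw by simp
    moreover note rpw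
    ultimately have a2nC: "a2 \<notin> Cg" unfolding a2_def using notC_conj[OF wG w(3) a1, of "rev pw"] w by simp
    have vm: "valid (gone, ms)"
      using vx sp(1) evm one_Cg unfolding valid_def by (simp add: alt_append)
    have hm: "hdtag ms = Some True" using sp(2,3) unfolding hdtag_def by simp
    have "gact (a2 \<cdot> m) e0 = gact a2 (gact m e0)" using gact_mult[OF a2c mc valid_e0] .
    also have "\<dots> = act False a2 (gone, ms)" using build[OF vm] gact_grp[OF a2F vm] m_def by simp
    also have "\<dots> = stp False a2 ms" using act_nb[of ms False] hm a2c by simp
    also have "\<dots> = (cp a2, (False, rt a2) # ms)" unfolding stp_def using rt_ne1[OF a2c a2nC] by simp
    finally have n1: "gact (a2 \<cdot> m) e0 = (cp a2, (False, rt a2) # ms)" .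
    have "gact a1 e0 = act False a1 (gone, [])" using gact_grp[OF a1F valid_e0] unfolding e0_def by simp
    also have "\<dots> = (cp a1, [(False, rt a1)])" using rt_ne1[OF a1c a1nC] a1c by (simp add: stp_def)
    finally have y0: "gact a1 e0 = (cp a1, [(False, rt a1)])" .
    have vy: "valid (cp a1, [(False, rt a1)])" using valid_gact[OF a1c valid_e0] y0 by simp
    have "alt (ms @ [(False, rt a1)])" using vm sp(2,4) unfolding valid_def by (simp add: alt_append)
    then obtain c' zs where n2': "gact m (cp a1, [(False, rt a1)]) = (c', zs @ [(False, rt a1)])"
      using lastpres[OF vy _ _ evm] m_def by blast
    have "gact (m \<cdot> a1) e0 = gact m (gact a1 e0)" using gact_mult[OF mc a1c valid_e0] .
    hence n2: "gact (m \<cdot> a1) e0 = (c', zs @ [(False, rt a1)])" using y0 n2' by simp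
    have "m \<cdot> a1 = a2 \<cdot> m" using key unfolding a1_def a2_def .
    hence "(c', zs @ [(False, rt a1)]) = (cp a2, (False, rt a2) # ms)" using n1 n2 by simp
    hence "last ((False, rt a2) # ms) = (False, rt a1)" by (metis last_snoc snd_conv)
    thus ?thesis using sp(2,4) by simp
  qed
qed

end
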